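(* Let $\mathcal C$ be the epireflective subcategory of $\mathbf{Top}$ defined by any one of the separation axioms $T_0$, $T_1$, $T_2$, functionally Hausdorff, and let $\mathbf{TopMlt}$ be the category of topological Mal'tsev spaces. Then $\mathrm{r}_{\mathcal C}(\mathbf{TopMlt})$ is an epireflective subcategory of $\mathbf{TopMlt}$; in particular, for every topological Mal'tsev space $(X,\Phi)$, the reflection $\mathrm{r}_{\mathcal C}X$ is a topological Mal'tsev space with the operation $\mathrm{r}_{\mathcal C}(\Phi)$ determined by $\mathrm{r}_{\mathcal C}(\Phi)(\mathrm{r}_{(X,\mathcal C)}(x),\mathrm{r}_{(X,\mathcal C)}(y),\mathrm{r}_{(X,\mathcal C)}(z))=\mathrm{r}_{(X,\mathcal C)}(\Phi(x,y,z))$.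
   Context: A Mal'tsev operation on a space $X$ is a map $\Phi\colon X^3\to X$ with $\Phi(x,x,y)=\Phi(y,x,x)=y$ for all $x,y$; a topological Mal'tsev space is a space with a continuous Mal'tsev operation, and morphisms in $\mathbf{TopMlt}$ are continuous maps preserving the operation. For an epireflective subcategory $\mathcal C$ of $\mathbf{Top}$ (full, isomorphism-closed, closed under products and subspaces), $\mathrm{r}_{\mathcal C}X$ is the reflection of $X$ with universal continuous surjection $\mathrm{r}_{(X,\mathcal C)}\colon X\to\mathrm{r}_{\mathcal C}X$. A space is functionally Hausdorff if distinct points are separated by a real-valued continuous function. *)

theory Defs
  imports "HOL-Analysis.Analysis"
begin

datatype sepax = SepT0 | SepT1 | SepT2 | SepFH

definition functionally_Hausdorff :: "'a topology \<Rightarrow> bool" where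
  "functionally_Hausdorff X \<longleftrightarrow>
     (\<forall>x\<in>topspace X. \<forall>y\<in>topspace X. x \<noteq> y \<longrightarrow>
        (\<exists>f. continuous_map X euclideanreal f \<and> f x \<noteq> f y))"

definition sat :: "sepax \<Rightarrow> 'a topology \<Rightarrow> bool" where
  "sat ax X = (case ax of
      SepT0 \<Rightarrow> t0_space X
    | SepT1 \<Rightarrow> t1_space X
    | SepT2 \<Rightarrow> Hausdorff_space X
    | SepFH \<Rightarrow> functionally_Hausdorff X)"

definition top_maltsev :: "'a topology \<Rightarrow> ('a \<Rightarrow> 'a \<Rightarrow> 'a \<Rightarrow> 'a) \<Rightarrow> bool" where
  "top_maltsev X \<Phi> \<longleftrightarrow>
     continuous_map (prod_topology X (prod_topology X X)) X (\<lambda>(x, y, z). \<Phi> x y z) \<and>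
     (\<forall>x\<in>topspace X. \<forall>y\<in>topspace X. \<Phi> x x y = y \<and> \<Phi> y x x = y)"

definition maltsev_hom ::
  "'a topology \<Rightarrow> ('a \<Rightarrow> 'a \<Rightarrow> 'a \<Rightarrow> 'a) \<Rightarrow> 'b topology \<Rightarrow> ('b \<Rightarrow> 'b \<Rightarrow> 'b \<Rightarrow> 'b) \<Rightarrow> ('a \<Rightarrow> 'b) \<Rightarrow> bool" where
  "maltsev_hom X \<Phi> Z \<Theta> f \<longleftrightarrow>
     continuous_map X Z f \<and>
     (\<forall>x\<in>topspace X. \<forall>y\<in>topspace X. \<forall>z\<in>topspace X. f (\<Phi> x y z) = \<Theta> (f x) (f y) (f z))"

text \<open>Factorisation of continuous maps X -> Z (Z in C) through q : X -> Y.
  Uniqueness of the factorisation is automatic since q is required to be surjective.\<close>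
definition factors_through ::
  "sepax \<Rightarrow> 'a topology \<Rightarrow> 'b topology \<Rightarrow> ('a \<Rightarrow> 'b) \<Rightarrow> 'c topology \<Rightarrow> bool" where
  "factors_through ax X Y q Z \<longleftrightarrow>
     (sat ax Z \<longrightarrow> (\<forall>f. continuous_map X Z f \<longrightarrow>
        (\<exists>g. continuous_map Y Z g \<and> (\<forall>x\<in>topspace X. g (q x) = f x))))"

end

theory Submission
  imports Defs
begin

lemma sat_inj:
  assumes c: "continuous_map W Z f" and i: "inj_on f (topspace W)" and s: "sat ax Z"
  shows "sat ax W"
proof (cases ax)
  case SepT0
  have "t0_space Z" using s SepT0 by (simp add: sat_def)
  have "t0_space W"
    unfolding t0_space_def
  proof (intro ballI impI)
    fix x y assume x: "x \<in> topspace W" and y: "y \<in> topspace W" and "x \<noteq> y"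
    then have "f x \<noteq> f y" using i by (meson inj_onD)
    moreover have "f x \<in> topspace Z" "f y \<in> topspace Z"
      using c x y by (auto simp: continuous_map_def)
    ultimately obtain U where U: "openin Z U" "f x \<notin> U \<longleftrightarrow> f y \<in> U"
      using \<open>t0_space Z\<close> unfolding t0_space_def by blast
    show "\<exists>U. openin W U \<and> (x \<notin> U \<longleftrightarrow> y \<in> U)"
      by (rule exI[of _ "{x \<in> topspace W. f x \<in> U}"])
         (use U x y openin_continuous_map_preimage[OF c] in auto)
  qed
  then show ?thesis using SepT0 by (simp add: sat_def)
next
  case SepT1
  have "t1_space Z" using s SepT1 by (simp add: sat_def)
  have "t1_space W"
    unfolding t1_space_def
  proof (intro ballI impI)
    fix x y assume x: "x \<in> topspace W" and y: "y \<in> topspace W" and "x \<noteq> y"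
    then have "f x \<noteq> f y" using i by (meson inj_onD)
    moreover have "f x \<in> topspace Z" "f y \<in> topspace Z"
      using c x y by (auto simp: continuous_map_def)
    ultimately obtain U where U: "openin Z U" "f x \<in> U" "f y \<notin> U"
      using \<open>t1_space Z\<close> unfolding t1_space_def by blast
    show "\<exists>U. openin W U \<and> x \<in> U \<and> y \<notin> U"
      by (rule exI[of _ "{x \<in> topspace W. f x \<in> U}"])
         (use U x y openin_continuous_map_preimage[OF c] in auto)
  qed
  then show ?thesis using SepT1 by (simp add: sat_def)
next
  case SepT2
  then show ?thesis using s Hausdorff_space_injective_preimage[OF _ c i] by (simp add: sat_def)
next
  case SepFH
  have fh: "functionally_Hausdorff Z" using s SepFH by (simp add: sat_def)
  have "functionally_Hausdorff W"
    unfolding functionally_Hausdorff_def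
  proof (intro ballI impI)
    fix x y assume x: "x \<in> topspace W" and y: "y \<in> topspace W" and "x \<noteq> y"
    then have "f x \<noteq> f y" using i by (meson inj_onD)
    moreover have "f x \<in> topspace Z" "f y \<in> topspace Z"
      using c x y by (auto simp: continuous_map_def)
    ultimately obtain g where g: "continuous_map Z euclideanreal g" "g (f x) \<noteq> g (f y)"
      using fh unfolding functionally_Hausdorff_def by blast
    show "\<exists>g. continuous_map W euclideanreal g \<and> g x \<noteq> g y"
      by (rule exI[of _ "g \<circ> f"]) (use g c continuous_map_compose in auto)
  qed
  then show ?thesis using SepFH by (simp add: sat_def)
qed

lemma fac_any:
  fixes X :: "'a topology" and Y :: "'b topology" and Z :: "'c topology"
  assumes h5: "\<forall>Z :: 'a topology. factors_through ax X Y q Z"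
    and sZ: "sat ax Z" and cf: "continuous_map X Z f"
  shows "\<exists>g. continuous_map Y Z g \<and> (\<forall>x\<in>topspace X. g (q x) = f x)"
proof -
  define S where "S = topspace X"
  define h where "h = inv_into S f"
  define R where "R = h ` f ` S"
  define Z' where "Z' = pullback_topology R f Z"
  have c1: "continuous_map Z' Z f"
    using continuous_map_pullback[OF continuous_map_id[of Z], of R f] by (simp add: Z'_def)
  have fh: "\<And>x. x \<in> S \<Longrightarrow> f (h (f x)) = f x"
    unfolding h_def by (simp add: f_inv_into_f)
  have inj: "inj_on f (topspace Z')"
  proof (rule inj_onI)
    fix r1 r2 assume "r1 \<in> topspace Z'" "r2 \<in> topspace Z'" and e: "f r1 = f r2"
    then obtain x1 x2 where "x1 \<in> S" "x2 \<in> S" "r1 = h (f x1)" "r2 = h (f x2)"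
      by (auto simp: Z'_def topspace_pullback_topology R_def)
    then show "r1 = r2" using e fh by metis
  qed
  have sZ': "sat ax Z'" by (rule sat_inj[OF c1 inj sZ])
  have c2: "continuous_map X Z' (h \<circ> f)"
    unfolding Z'_def
  proof (rule continuous_map_pullback')
    show "continuous_map X Z (f \<circ> (h \<circ> f))"
      by (rule continuous_map_eq[OF cf]) (simp add: fh S_def)
    show "topspace X \<subseteq> (h \<circ> f) -` R" by (auto simp: R_def S_def)
  qed
  obtain g' where g': "continuous_map Y Z' g'" "\<forall>x\<in>topspace X. g' (q x) = (h \<circ> f) x"
    using h5[rule_format, of Z'] sZ' c2 unfolding factors_through_def by blast
  show ?thesis
    by (rule exI[of _ "f \<circ> g'"]) (use g' c1 fh continuous_map_compose in \<open>auto simp: S_def\<close>)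
qed

lemma open_map_prod2:
  assumes f: "open_map X X' f" and g: "open_map Y Y' g"
  shows "open_map (prod_topology X Y) (prod_topology X' Y') (\<lambda>(x,y). (f x, g y))"
  unfolding open_map_def
proof (intro allI impI)
  fix S assume S: "openin (prod_topology X Y) S"
  show "openin (prod_topology X' Y') ((\<lambda>(x,y). (f x, g y)) ` S)"
    unfolding openin_prod_topology_alt
  proof (intro allI impI)
    fix a b assume "(a, b) \<in> (\<lambda>(x,y). (f x, g y)) ` S"
    then obtain x y where xy: "(x,y) \<in> S" "a = f x" "b = g y" by auto
    then obtain U V where UV: "openin X U" "openin Y V" "x \<in> U" "y \<in> V" "U \<times> V \<subseteq> S"
      using S unfolding openin_prod_topology_alt by meson
    show "\<exists>U V. openin X' U \<and> openin Y' V \<and> a \<in> U \<and> b \<in> V \<and> U \<times> V \<subseteq> (\<lambda>(x,y). (f x, g y)) ` S"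
    proof (intro exI conjI)
      show "openin X' (f ` U)" using f UV unfolding open_map_def by blast
      show "openin Y' (g ` V)" using g UV unfolding open_map_def by blast
      show "a \<in> f ` U" "b \<in> g ` V" using xy UV by auto
      show "f ` U \<times> g ` V \<subseteq> (\<lambda>(x,y). (f x, g y)) ` S" using UV by force
    qed
  qed
qed

theorem theorem4p11:
  fixes ax :: sepax
    and X :: "'a topology" and \<Phi> :: "'a \<Rightarrow> 'a \<Rightarrow> 'a \<Rightarrow> 'a"
    and Y :: "'b topology" and q :: "'a \<Rightarrow> 'b"
  assumes "top_maltsev X \<Phi>"
    and "sat ax Y"
    and "continuous_map X Y q"
    and "q ` topspace X = topspace Y"
    and "\<forall>Z :: 'a topology. factors_through ax X Y q Z"
    and "\<forall>Z :: 'b topology. factors_through ax X Y q Z"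
    and "\<forall>Z :: ('b \<times> 'b \<times> 'b) topology. factors_through ax X Y q Z"
  shows "\<exists>\<Psi>. top_maltsev Y \<Psi> \<and>
           (\<forall>x\<in>topspace X. \<forall>y\<in>topspace X. \<forall>z\<in>topspace X.
              \<Psi> (q x) (q y) (q z) = q (\<Phi> x y z)) \<and>
           (\<forall>(Z :: 'c topology) \<Theta> f.
              sat ax Z \<and> top_maltsev Z \<Theta> \<and> maltsev_hom X \<Phi> Z \<Theta> f \<longrightarrow>
              (\<exists>g. maltsev_hom Y \<Psi> Z \<Theta> g \<and> (\<forall>x\<in>topspace X. g (q x) = f x)))"
proof -
  note tm = assms(1) and sY = assms(2) and cq = assms(3) and sur = assms(4) and h5 = assms(5)
  define S where "S = topspace X"
  define T where "T = topspace Y"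
  have cP: "continuous_map (prod_topology X (prod_topology X X)) X (\<lambda>(x, y, z). \<Phi> x y z)"
    and ml: "\<And>x y. x \<in> S \<Longrightarrow> y \<in> S \<Longrightarrow> \<Phi> x x y = y \<and> \<Phi> y x x = y"
    using tm by (auto simp: top_maltsev_def S_def)
  have PS: "\<And>x y z. x \<in> S \<Longrightarrow> y \<in> S \<Longrightarrow> z \<in> S \<Longrightarrow> \<Phi> x y z \<in> S"
    using cP by (auto simp: continuous_map_def S_def Pi_iff)
  have fib: "\<And>f x x'. continuous_map X Y f \<Longrightarrow> x \<in> S \<Longrightarrow> x' \<in> S \<Longrightarrow> q x = q x' \<Longrightarrow> f x = f x'"
  proof -
    fix f x x' assume cf: "continuous_map X Y f" and xx: "x \<in> S" "x' \<in> S" "q x = q x'"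
    obtain g where g: "\<forall>x\<in>topspace X. g (q x) = f x"
      using fac_any[OF h5 sY cf] by blast
    have e1: "g (q x) = f x" using g xx(1) unfolding S_def by blast
    have e2: "g (q x') = f x'" using g xx(2) unfolding S_def by blast
    show "f x = f x'" using e1 e2 xx(3) by simp
  qed
  have cpre: "\<And>g. continuous_map X (prod_topology X (prod_topology X X)) g \<Longrightarrow>
      continuous_map X Y (\<lambda>t. q (case g t of (x, y, z) \<Rightarrow> \<Phi> x y z))"
  proof -
    fix g assume "continuous_map X (prod_topology X (prod_topology X X)) g"
    then have "continuous_map X Y (q \<circ> ((\<lambda>(x, y, z). \<Phi> x y z) \<circ> g))"
      using continuous_map_compose[OF continuous_map_compose[OF _ cP] cq] by blast
    then show "continuous_map X Y (\<lambda>t. q (case g t of (x, y, z) \<Rightarrow> \<Phi> x y z))"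
      by (simp add: o_def)
  qed
  have cc: "\<And>a b c. continuous_map X X a \<Longrightarrow> continuous_map X X b \<Longrightarrow> continuous_map X X c \<Longrightarrow>
      continuous_map X Y (\<lambda>t. q (\<Phi> (a t) (b t) (c t)))"
  proof -
    fix a b c assume "continuous_map X X a" "continuous_map X X b" "continuous_map X X c"
    then have "continuous_map X (prod_topology X (prod_topology X X)) (\<lambda>t. (a t, b t, c t))"
      by (intro continuous_map_pairedI)
    from cpre[OF this] show "continuous_map X Y (\<lambda>t. q (\<Phi> (a t) (b t) (c t)))" by simp
  qed
  have ccX: "\<And>a b c. continuous_map X X a \<Longrightarrow> continuous_map X X b \<Longrightarrow> continuous_map X X c \<Longrightarrow>
      continuous_map X X (\<lambda>t. \<Phi> (a t) (b t) (c t))"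
  proof -
    fix a b c assume "continuous_map X X a" "continuous_map X X b" "continuous_map X X c"
    then have "continuous_map X (prod_topology X (prod_topology X X)) (\<lambda>t. (a t, b t, c t))"
      by (intro continuous_map_pairedI)
    from continuous_map_compose[OF this cP] show "continuous_map X X (\<lambda>t. \<Phi> (a t) (b t) (c t))"
      by (simp add: o_def)
  qed
  have cconst: "\<And>y. y \<in> S \<Longrightarrow> continuous_map X X (\<lambda>t. y)" by (simp add: S_def)
  have cI: "continuous_map X X (\<lambda>t. t)" using continuous_map_id by (simp add: id_def)
  have c1: "\<And>y z. y \<in> S \<Longrightarrow> z \<in> S \<Longrightarrow> continuous_map X Y (\<lambda>t. q (\<Phi> t y z))"
    by (rule cc[OF cI cconst cconst])
  have c2: "\<And>x z. x \<in> S \<Longrightarrow> z \<in> S \<Longrightarrow> continuous_map X Y (\<lambda>t. q (\<Phi> x t z))"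
    by (rule cc[OF cconst cI cconst])
  have c3: "\<And>x y. x \<in> S \<Longrightarrow> y \<in> S \<Longrightarrow> continuous_map X Y (\<lambda>t. q (\<Phi> x y t))"
    by (rule cc[OF cconst cconst cI])
  have compat: "\<And>x x' y y' z z'. x \<in> S \<Longrightarrow> x' \<in> S \<Longrightarrow> y \<in> S \<Longrightarrow> y' \<in> S \<Longrightarrow> z \<in> S \<Longrightarrow> z' \<in> S
     \<Longrightarrow> q x = q x' \<Longrightarrow> q y = q y' \<Longrightarrow> q z = q z' \<Longrightarrow> q (\<Phi> x y z) = q (\<Phi> x' y' z')"
  proof -
    fix x x' y y' z z' assume a: "x \<in> S" "x' \<in> S" "y \<in> S" "y' \<in> S" "z \<in> S" "z' \<in> S"
      "q x = q x'" "q y = q y'" "q z = q z'"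
    have "q (\<Phi> x y z) = q (\<Phi> x' y z)" using fib[OF c1, of y z x x'] a by blast
    also have "\<dots> = q (\<Phi> x' y' z)" using fib[OF c2, of x' z y y'] a by blast
    also have "\<dots> = q (\<Phi> x' y' z')" using fib[OF c3, of x' y' z z'] a by blast
    finally show "q (\<Phi> x y z) = q (\<Phi> x' y' z')" .
  qed
  define Yq where "Yq = topology (\<lambda>U. U \<subseteq> T \<and> openin X {x \<in> S. q x \<in> U})"
  have ist: "istopology (\<lambda>U. U \<subseteq> T \<and> openin X {x \<in> S. q x \<in> U})"
  proof -
    have i1: "A \<inter> B \<subseteq> T \<and> openin X {x \<in> S. q x \<in> A \<inter> B}"
      if "A \<subseteq> T \<and> openin X {x \<in> S. q x \<in> A}" "B \<subseteq> T \<and> openin X {x \<in> S. q x \<in> B}" for A B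
    proof -
      have "{x \<in> S. q x \<in> A \<inter> B} = {x \<in> S. q x \<in> A} \<inter> {x \<in> S. q x \<in> B}" by auto
      then show ?thesis using that by auto
    qed
    have i2: "\<Union>K \<subseteq> T \<and> openin X {x \<in> S. q x \<in> \<Union>K}"
      if K: "\<forall>A\<in>K. A \<subseteq> T \<and> openin X {x \<in> S. q x \<in> A}" for K
    proof -
      have "{x \<in> S. q x \<in> \<Union>K} = \<Union>((\<lambda>A. {x \<in> S. q x \<in> A}) ` K)" by auto
      moreover have "openin X (\<Union>((\<lambda>A. {x \<in> S. q x \<in> A}) ` K))"
        using K by (intro openin_Union) auto
      ultimately show ?thesis using K by auto
    qed
    show ?thesis unfolding istopology_def using i1 i2 by blast
  qed
  have oYq: "\<And>U. openin Yq U \<longleftrightarrow> U \<subseteq> T \<and> openin X {x \<in> S. q x \<in> U}"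
    unfolding Yq_def using ist by simp
  have tYq: "topspace Yq = T"
  proof -
    have "{x \<in> S. q x \<in> T} = S" using sur by (auto simp: S_def T_def)
    then have "openin Yq T" unfolding oYq by (simp add: S_def)
    then show ?thesis unfolding topspace_def oYq by blast
  qed
  have cid: "continuous_map Yq Y id"
    unfolding continuous_map_def tYq
  proof (intro conjI allI impI)
    show "id \<in> T \<rightarrow> topspace Y" by (simp add: T_def)
    fix U assume U: "openin Y U"
    have e: "{x \<in> T. id x \<in> U} = U" using openin_subset[OF U] by (auto simp: T_def)
    have "openin X {x \<in> S. q x \<in> U}"
      using openin_continuous_map_preimage[OF cq U] by (simp add: S_def)
    then show "openin Yq {x \<in> T. id x \<in> U}" unfolding e oYq
      using openin_subset[OF U] by (simp add: T_def)
  qed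
  have sYq: "sat ax Yq" by (rule sat_inj[OF cid _ sY]) simp
  have cqq: "continuous_map X Yq q"
    unfolding continuous_map_def oYq tYq using cq by (auto simp: S_def T_def continuous_map_def)
  obtain g0 where g0: "continuous_map Y Yq g0" "\<forall>x\<in>topspace X. g0 (q x) = q x"
    using assms(6)[rule_format, of Yq] sYq cqq unfolding factors_through_def by blast
  have cid2: "continuous_map Y Yq id"
  proof (rule continuous_map_eq[OF g0(1)])
    fix y assume "y \<in> topspace Y"
    then obtain x where "x \<in> topspace X" "y = q x" using sur by auto
    then show "g0 y = id y" using g0(2) by simp
  qed
  have quot: "quotient_map X Y q"
    unfolding quotient_map_def
  proof (intro conjI allI impI)
    show "q ` topspace X = topspace Y" by (rule sur)
    fix U assume U: "U \<subseteq> topspace Y"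
    show "openin X {x \<in> topspace X. q x \<in> U} = openin Y U"
    proof
      assume "openin X {x \<in> topspace X. q x \<in> U}"
      then have "openin Yq U" unfolding oYq using U by (simp add: S_def T_def)
      then have "openin Y {x \<in> topspace Y. id x \<in> U}"
        using openin_continuous_map_preimage[OF cid2] by blast
      moreover have "{x \<in> topspace Y. id x \<in> U} = U" using U by auto
      ultimately show "openin Y U" by simp
    qed (rule openin_continuous_map_preimage[OF cq])
  qed
  have om: "open_map X Y q"
    unfolding open_map_def
  proof (intro allI impI)
    fix U assume U: "openin X U"
    have Us: "U \<subseteq> S" using openin_subset[OF U] by (simp add: S_def)
    have "openin X {x \<in> topspace X. q x \<in> q ` U}"
      unfolding openin_subopen[of X "{x \<in> topspace X. q x \<in> q ` U}"]
    proof
      fix v assume "v \<in> {x \<in> topspace X. q x \<in> q ` U}"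
      then obtain u where v: "v \<in> S" and u: "u \<in> U" "q v = q u" by (auto simp: S_def)
      have uS: "u \<in> S" using u Us by auto
      have cc: "continuous_map X X (\<lambda>w. \<Phi> w v u)"
        by (rule ccX[OF cI cconst cconst]) (use v uS in auto)
      define V where "V = {w \<in> topspace X. \<Phi> w v u \<in> U}"
      show "\<exists>T. openin X T \<and> v \<in> T \<and> T \<subseteq> {x \<in> topspace X. q x \<in> q ` U}"
      proof (intro exI conjI)
        show "openin X V" unfolding V_def by (rule openin_continuous_map_preimage[OF cc U])
        have "\<Phi> v v u = u" using ml[OF v uS] by blast
        then show "v \<in> V" using v u(1) by (simp add: V_def S_def)
        show "V \<subseteq> {x \<in> topspace X. q x \<in> q ` U}"
        proof
          fix w assume w: "w \<in> V"
          then have wS: "w \<in> S" by (simp add: V_def S_def)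
          have "q (\<Phi> w v u) = q (\<Phi> w v v)" by (rule compat[OF wS wS v v uS v refl refl u(2)[symmetric]])
          also have "\<dots> = q w" using ml[OF v wS] by simp
          finally have e: "q (\<Phi> w v u) = q w" .
          have "\<Phi> w v u \<in> U" using w by (simp add: V_def)
          then have "q w \<in> q ` U" using e by (metis image_eqI)
          then show "w \<in> {x \<in> topspace X. q x \<in> q ` U}" using wS by (simp add: S_def)
        qed
      qed
    qed
    moreover have "q ` U \<subseteq> topspace Y" using Us sur by (auto simp: S_def)
    ultimately show "openin Y (q ` U)" using quot unfolding quotient_map_def by (simp add: S_def)
  qed
  define q2 where "q2 = (\<lambda>(x::'a, y::'a). (q x, q y))"
  define q3 where "q3 = (\<lambda>(x::'a, yz). (q x, q2 yz))"
  have om3: "open_map (prod_topology X (prod_topology X X)) (prod_topology Y (prod_topology Y Y)) q3"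
    unfolding q3_def q2_def by (intro open_map_prod2 om)
  have cq2: "continuous_map (prod_topology X X) (prod_topology Y Y) q2"
    unfolding q2_def continuous_map_prod_top using cq by simp
  have cq3: "continuous_map (prod_topology X (prod_topology X X)) (prod_topology Y (prod_topology Y Y)) q3"
    unfolding q3_def continuous_map_prod_top using cq cq2 by simp
  have sur3: "q3 ` topspace (prod_topology X (prod_topology X X)) = topspace (prod_topology Y (prod_topology Y Y))"
  proof -
    have "q3 ` (S \<times> (S \<times> S)) = T \<times> (T \<times> T)"
    proof
      show "q3 ` (S \<times> S \<times> S) \<subseteq> T \<times> T \<times> T" using sur by (auto simp: q3_def q2_def S_def T_def)
      show "T \<times> T \<times> T \<subseteq> q3 ` (S \<times> S \<times> S)"
      proof
        fix t assume "t \<in> T \<times> T \<times> T"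
        then obtain a b c where "t = (a,b,c)" "a \<in> T" "b \<in> T" "c \<in> T" by auto
        moreover then obtain x y z where "x \<in> S" "y \<in> S" "z \<in> S" "a = q x" "b = q y" "c = q z"
          using sur unfolding S_def T_def by (metis imageE)
        ultimately show "t \<in> q3 ` (S \<times> S \<times> S)"
          by (auto simp: q3_def q2_def intro!: image_eqI[of _ _ "(x,y,z)"])
      qed
    qed
    then show ?thesis by (simp add: S_def T_def)
  qed
  have quot3: "quotient_map (prod_topology X (prod_topology X X)) (prod_topology Y (prod_topology Y Y)) q3"
    by (rule continuous_open_imp_quotient_map[OF cq3 om3 sur3])
  define hq where "hq = inv_into S q"
  have hqS: "\<And>a. a \<in> T \<Longrightarrow> hq a \<in> S" and qhq: "\<And>a. a \<in> T \<Longrightarrow> q (hq a) = a"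
    using sur by (auto simp: hq_def S_def T_def inv_into_into f_inv_into_f)
  define \<Psi> where "\<Psi> = (\<lambda>a b c. q (\<Phi> (hq a) (hq b) (hq c)))"
  have qT: "\<And>x. x \<in> S \<Longrightarrow> q x \<in> T" using sur by (auto simp: S_def T_def)
  have Pq: "\<And>x y z. x \<in> S \<Longrightarrow> y \<in> S \<Longrightarrow> z \<in> S \<Longrightarrow> \<Psi> (q x) (q y) (q z) = q (\<Phi> x y z)"
    unfolding \<Psi>_def by (rule compat) (auto simp: hqS qhq qT)
  have cPsi: "continuous_map (prod_topology Y (prod_topology Y Y)) Y (\<lambda>(a, b, c). \<Psi> a b c)"
  proof (rule continuous_compose_quotient_map[OF quot3])
    have "continuous_map (prod_topology X (prod_topology X X)) Y (q \<circ> (\<lambda>(x, y, z). \<Phi> x y z))"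
      using cP cq continuous_map_compose by blast
    then show "continuous_map (prod_topology X (prod_topology X X)) Y ((\<lambda>(a, b, c). \<Psi> a b c) \<circ> q3)"
      by (rule continuous_map_eq) (auto simp: q3_def q2_def Pq S_def)
  qed
  have tmY: "top_maltsev Y \<Psi>"
    unfolding top_maltsev_def
  proof (intro conjI cPsi ballI)
    fix a b assume "a \<in> topspace Y" "b \<in> topspace Y"
    then have a: "a \<in> T" and b: "b \<in> T" by (auto simp: T_def)
    show "\<Psi> a a b = b" unfolding \<Psi>_def using ml[OF hqS[OF a] hqS[OF b]] qhq[OF b] by simp
    show "\<Psi> b a a = b" unfolding \<Psi>_def using ml[OF hqS[OF a] hqS[OF b]] qhq[OF b] by simp
  qed
  have univ: "\<forall>(Z :: 'c topology) \<Theta> f.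
              sat ax Z \<and> top_maltsev Z \<Theta> \<and> maltsev_hom X \<Phi> Z \<Theta> f \<longrightarrow>
              (\<exists>g. maltsev_hom Y \<Psi> Z \<Theta> g \<and> (\<forall>x\<in>topspace X. g (q x) = f x))"
  proof (intro allI impI, elim conjE)
    fix Z :: "'c topology" and \<Theta> f
    assume sZ: "sat ax Z" and mh: "maltsev_hom X \<Phi> Z \<Theta> f"
    have cf: "continuous_map X Z f"
      and hom: "\<And>x y z. x \<in> S \<Longrightarrow> y \<in> S \<Longrightarrow> z \<in> S \<Longrightarrow> f (\<Phi> x y z) = \<Theta> (f x) (f y) (f z)"
      using mh by (auto simp: maltsev_hom_def S_def)
    obtain g where g: "continuous_map Y Z g" "\<forall>x\<in>topspace X. g (q x) = f x"
      using fac_any[OF h5 sZ cf] by blast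
    have "maltsev_hom Y \<Psi> Z \<Theta> g"
      unfolding maltsev_hom_def
    proof (intro conjI g(1) ballI)
      fix a b c assume abc: "a \<in> topspace Y" "b \<in> topspace Y" "c \<in> topspace Y"
      obtain x where x: "x \<in> S" "a = q x" using abc(1) sur unfolding S_def by blast
      obtain y where y: "y \<in> S" "b = q y" using abc(2) sur unfolding S_def by blast
      obtain z where z: "z \<in> S" "c = q z" using abc(3) sur unfolding S_def by blast
      have gq: "\<And>w. w \<in> S \<Longrightarrow> g (q w) = f w" using g(2) unfolding S_def by blast
      have "g (\<Psi> a b c) = g (q (\<Phi> x y z))" using Pq[OF x(1) y(1) z(1)] x y z by simp
      also have "\<dots> = f (\<Phi> x y z)" by (rule gq[OF PS[OF x(1) y(1) z(1)]])
      also have "\<dots> = \<Theta> (f x) (f y) (f z)" by (rule hom[OF x(1) y(1) z(1)])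
      also have "\<dots> = \<Theta> (g a) (g b) (g c)" using gq x y z by simp
      finally show "g (\<Psi> a b c) = \<Theta> (g a) (g b) (g c)" .
    qed
    then show "\<exists>g. maltsev_hom Y \<Psi> Z \<Theta> g \<and> (\<forall>x\<in>topspace X. g (q x) = f x)"
      using g(2) by blast
  qed
  show ?thesis
    using tmY Pq univ by (auto simp: S_def)
qed

end
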